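(* Let $n\ge1$ and $3\le l\le d$. Every $w\in\mathbb{R}^{nd}$ satisfying $y\,(w\cdot x)\ge1$ for all $(x,y)$ in the support of $\mathcal{D}$ has $\|w\|^2\ge n$. In particular, $\hat w=\arg\min\{\|w\|^2 : w\in\mathbb{R}^{nd},\ y\,(w\cdot x)\ge1 \text{ for all } (x,y)\text{ in the support of }\mathcal{D}\}$ satisfies $\|\hat w\|^2\ge n$.
   Context: Let $o_1,\dots,o_l\in\mathbb{R}^d$ be orthonormal vectors. Inputs are $x=(x[1],\dots,x[n])\in\mathbb{R}^{nd}$ with blocks $x[j]\in\mathbb{R}^d$; $w\cdot x$ is the standard inner product on $\mathbb{R}^{nd}$. The distribution $\mathcal{D}$ on $\mathbb{R}^{nd}\times\{\pm1\}$: $y$ uniform on $\{\pm1\}$; given $y=1$, an index $j_+$ uniform on $\{1,\dots,n\}$ is drawn, $x[j_+]=o_1$, and for each $j\ne j_+$ independently $x[j]=o_{i_j}$ with $i_j$ uniform on $\{3,\dots,l\}$; given $y=-1$, the same with $o_2$ instead of $o_1$. *)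

theory Defs
  imports "HOL-Analysis.Analysis" "HOL-Probability.Product_PMF"
begin

text \<open>Inputs x in R^{nd} are rendered as real^'d^'n: block j is x $ j in R^d,
  with n = CARD('n), d = CARD('d).  The orthonormal vectors
  o_1..o_l are ov 1, ..., ov l.\<close>

definition data_dist ::
  "(nat \<Rightarrow> real^'d) \<Rightarrow> nat \<Rightarrow> ((real^'d^'n::finite) \<times> real) pmf" where
  "data_dist ov l =
     bind_pmf (pmf_of_set {1, -1 :: real}) (\<lambda>y.
     bind_pmf (pmf_of_set (UNIV :: 'n set)) (\<lambda>jp.
     bind_pmf (Pi_pmf (UNIV :: 'n set) 3 (\<lambda>_. pmf_of_set {3..l})) (\<lambda>f.
     return_pmf ((\<chi> j. if j = jp then ov (if y = 1 then 1 else 2) else ov (f j)), y))))"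

end

theory Submission
  imports Defs
begin

lemma mem_dd:
  fixes ov :: "nat \<Rightarrow> real^'d" and jp :: "'n::finite"
  assumes "3 \<le> l" and "y \<in> {1, -1::real}"
  shows "((\<chi> j. if j = jp then ov (if y = 1 then 1 else 2) else ov 3) :: real^'d^'n, y)
           \<in> set_pmf (data_dist ov l)"
proof -
  have f: "(\<lambda>_::'n. 3::nat) \<in> set_pmf (Pi_pmf (UNIV :: 'n set) 3 (\<lambda>_. pmf_of_set {3..l}))"
    using assms(1) by (simp add: set_Pi_pmf PiE_dflt_def)
  have y: "y \<in> set_pmf (pmf_of_set {1, -1::real})" using assms(2) by (simp add: set_pmf_of_set)
  have j: "jp \<in> set_pmf (pmf_of_set (UNIV :: 'n set))" by (simp add: set_pmf_of_set)
  show ?thesis unfolding data_dist_def set_bind_pmf set_return_pmf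
    apply (rule UN_I[OF y])
    apply (rule UN_I[OF j])
    apply (rule UN_I[OF f])
    by simp
qed

lemma key:
  fixes ov :: "nat \<Rightarrow> real^'d" and l :: nat and w :: "real^'d^'n::finite"
  assumes "3 \<le> l"
    and orth: "\<forall>i\<in>{1..l}. \<forall>k\<in>{1..l}. ov i \<bullet> ov k = (if i = k then 1 else 0)"
    and H: "\<forall>(x, y) \<in> set_pmf (data_dist ov l :: ((real^'d^'n) \<times> real) pmf). y * (w \<bullet> x) \<ge> 1"
  shows "(norm w)^2 \<ge> real CARD('n)"
proof -
  have each: "w $ jp \<bullet> w $ jp \<ge> 1" for jp
  proof -
    define x1 :: "real^'d^'n" where "x1 = (\<chi> j. if j = jp then ov (if (1::real) = 1 then 1 else 2) else ov 3)"
    define x2 :: "real^'d^'n" where "x2 = (\<chi> j. if j = jp then ov (if (-1::real) = 1 then 1 else 2) else ov 3)"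
    have m1: "(x1, 1) \<in> set_pmf (data_dist ov l)" unfolding x1_def by (rule mem_dd) (use assms in auto)
    have m2: "(x2, -1) \<in> set_pmf (data_dist ov l)" unfolding x2_def by (rule mem_dd) (use assms in auto)
    have a1: "w \<bullet> x1 \<ge> 1" using bspec[OF H m1] by simp
    have a2: "- (w \<bullet> x2) \<ge> 1" using bspec[OF H m2] by simp
    have d: "x1 - x2 = (\<chi> j. if j = jp then ov 1 - ov 2 else 0)"
      unfolding x1_def x2_def by (simp add: vec_eq_iff)
    have "w \<bullet> (x1 - x2) = (\<Sum>j\<in>UNIV. w $ j \<bullet> (if j = jp then ov 1 - ov 2 else 0))"
      unfolding d inner_vec_def by simp
    also have "\<dots> = w $ jp \<bullet> (ov 1 - ov 2)"
      by (simp add: if_distrib cong: if_cong)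
    finally have e: "w $ jp \<bullet> (ov 1 - ov 2) \<ge> 2" using a1 a2 by (simp add: inner_diff_right)
    have o11: "ov 1 \<bullet> ov 1 = 1" and o22: "ov 2 \<bullet> ov 2 = 1" and o12: "ov 1 \<bullet> ov 2 = 0"
      and o21: "ov 2 \<bullet> ov 1 = 0"
      using orth assms(1) by auto
    have n2: "(ov 1 - ov 2) \<bullet> (ov 1 - ov 2) = 2"
      unfolding inner_diff_left inner_diff_right o11 o22 o12 o21 by simp
    have cs: "(w $ jp \<bullet> (ov 1 - ov 2))^2 \<le> (w $ jp \<bullet> w $ jp) * ((ov 1 - ov 2) \<bullet> (ov 1 - ov 2))"
      by (rule Cauchy_Schwarz_ineq)
    have "4 \<le> (w $ jp \<bullet> (ov 1 - ov 2))^2"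
      using power_mono[OF e, of 2] by simp
    with cs n2 show ?thesis by simp
  qed
  have "(norm w)^2 = (\<Sum>j\<in>UNIV. w $ j \<bullet> w $ j)"
    by (simp add: power2_norm_eq_inner inner_vec_def)
  also have "\<dots> \<ge> (\<Sum>j\<in>(UNIV::'n set). 1)"
    by (rule sum_mono) (rule each)
  finally show ?thesis by simp
qed

theorem proposition6p1:
  fixes ov :: "nat \<Rightarrow> real^'d" and l :: nat
  assumes "3 \<le> l" and "l \<le> CARD('d)"
    and "\<forall>i\<in>{1..l}. \<forall>k\<in>{1..l}. ov i \<bullet> ov k = (if i = k then 1 else 0)"
  shows "(\<forall>w :: real^'d^'n::finite.
            (\<forall>(x, y) \<in> set_pmf (data_dist ov l :: ((real^'d^'n) \<times> real) pmf). y * (w \<bullet> x) \<ge> 1)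
            \<longrightarrow> (norm w)^2 \<ge> real CARD('n))
       \<and> (\<forall>wh :: real^'d^'n.
            ((\<forall>(x, y) \<in> set_pmf (data_dist ov l :: ((real^'d^'n) \<times> real) pmf). y * (wh \<bullet> x) \<ge> 1)
             \<and> (\<forall>w :: real^'d^'n.
                  (\<forall>(x, y) \<in> set_pmf (data_dist ov l :: ((real^'d^'n) \<times> real) pmf). y * (w \<bullet> x) \<ge> 1)
                  \<longrightarrow> (norm wh)^2 \<le> (norm w)^2))
            \<longrightarrow> (norm wh)^2 \<ge> real CARD('n))"
  using key[OF assms(1) assms(3)] by blast

end
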